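(* Let $\rho\in[0,1)$. Then \[ (1-3\rho+2\rho^{n+1})n+3\rho^{n+1}\ge3\rho\quad\text{for all integers } n\ge1 \] holds if and only if $\rho\in[0,\tfrac15]$. *)

theory Defs
  imports Complex_Main
begin

end

theory Submission
  imports Defs
begin

theorem lemma4p2:
  fixes \<rho> :: real
  assumes "0 \<le> \<rho>" and "\<rho> < 1"
  shows "(\<forall>n::nat. n \<ge> 1 \<longrightarrow>
            (1 - 3 * \<rho> + 2 * \<rho> ^ (n + 1)) * real n + 3 * \<rho> ^ (n + 1) \<ge> 3 * \<rho>)
         \<longleftrightarrow> \<rho> \<le> 1 / 5"
proof
  assume H: "\<forall>n::nat. n \<ge> 1 \<longrightarrow>
            (1 - 3 * \<rho> + 2 * \<rho> ^ (n + 1)) * real n + 3 * \<rho> ^ (n + 1) \<ge> 3 * \<rho>"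
  have "(1 - 3 * \<rho> + 2 * \<rho> ^ 2) * 1 + 3 * \<rho> ^ 2 \<ge> 3 * \<rho>"
    using H[rule_format, of 1] by (simp add: power2_eq_square)
  then have "(5*\<rho> - 1) * (\<rho> - 1) \<ge> 0" by (simp add: algebra_simps power2_eq_square)
  then have "5*\<rho> - 1 \<le> 0" using assms
    by (smt (verit) mult_pos_neg)
  then show "\<rho> \<le> 1/5" by simp
next
  assume r: "\<rho> \<le> 1/5"
  show "\<forall>n::nat. n \<ge> 1 \<longrightarrow>
            (1 - 3 * \<rho> + 2 * \<rho> ^ (n + 1)) * real n + 3 * \<rho> ^ (n + 1) \<ge> 3 * \<rho>"
  proof (intro allI impI)
    fix n :: nat assume n: "n \<ge> 1"
    show "(1 - 3 * \<rho> + 2 * \<rho> ^ (n + 1)) * real n + 3 * \<rho> ^ (n + 1) \<ge> 3 * \<rho>"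
    proof (cases "n = 1")
      case True
      have "(5*\<rho> - 1) * (\<rho> - 1) \<ge> 0" using assms r
        by (intro mult_nonpos_nonpos) auto
      then show ?thesis using True by (simp add: algebra_simps power2_eq_square)
    next
      case False
      then have n2: "real n \<ge> 2" using n by linarith
      have p: "\<rho> ^ (n+1) \<ge> 0" using assms by simp
      have "(1 - 3*\<rho>) * real n \<ge> (1 - 3*\<rho>) * 2"
        using n2 r by (intro mult_left_mono) auto
      moreover have "2 * \<rho> ^ (n + 1) * real n \<ge> 0" using p by simp
      ultimately show ?thesis using p r by (simp add: algebra_simps)
    qed
  qed
qed

end
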